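(* Let $P\subset\mathbb R^n$ be a bounded open convex set, let $\phi\in\mathcal W(P)$, and suppose $\inf_P\phi=\phi(y)=-1$ for some $y\in\overline P$. Then $\sup_P\phi=\frac1n$ and $$P^\phi_a:=\{x\in P:\phi(x)<a\}=\frac{1-an}{1+n}\,y+\frac{na+n}{1+n}\,P\qquad\text{for every } -1<a<\tfrac1n .$$
   Context: $\mu$ denotes Lebesgue measure on $\mathbb R^n$. A convex function $f:P\to\mathbb R$ is identified with its lower semicontinuous extension $f:\overline P\to(-\infty,\infty]$, which is convex; in particular $\inf_P f$ is attained at some point of $\overline P$, and $f(y)$ for $y\in\overline P$ refers to this extension. The set of extremizers is $$\mathcal W(P):=\Big\{\psi:P\to\mathbb R\text{ convex}:\ \int_P\psi\,d\mu=0,\ -\frac{2}{n+1}\Big(\frac{n}{n+1}\Big)^n\inf_P\psi=\frac{1}{\mu(P)}\int_P|\psi|\,d\mu\Big\}.$$ For sets $A\subset\mathbb R^n$, $y\in\mathbb R^n$ and scalars $s,r$, $s\,y+rA=\{sy+ra:a\in A\}$. *)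

theory Defs
  imports "HOL-Analysis.Analysis"
begin

text \<open>Lower semicontinuous extension of a function on P to the closure of P,
  valued in the extended reals: the lower limit of f(x) as x tends to y within P.\<close>
definition lsc_ext :: "'a::euclidean_space set \<Rightarrow> ('a \<Rightarrow> real) \<Rightarrow> 'a \<Rightarrow> ereal" where
  "lsc_ext P f y = Liminf (at y within P) (\<lambda>x. ereal (f x))"

definition extremizers :: "'a::euclidean_space set \<Rightarrow> ('a \<Rightarrow> real) set" where
  "extremizers P = {\<psi>. convex_on P \<psi> \<and> \<psi> absolutely_integrable_on P \<and>
      integral P \<psi> = 0 \<and>
      - (2 / (real DIM('a) + 1)) * (real DIM('a) / (real DIM('a) + 1)) ^ DIM('a)
          * (INF x\<in>P. \<psi> x)
        = integral P (\<lambda>x. \<bar>\<psi> x\<bar>) / measure lebesgue P}"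

end

theory Submission
  imports Defs
begin

lemma aff_lebesgue:
  fixes m :: real and c :: "'a::euclidean_space"
  assumes "m > 0"
  shows "lebesgue = density (distr lebesgue lebesgue (\<lambda>x. m *\<^sub>R x + c)) (\<lambda>_. ennreal (m ^ DIM('a)))"
proof -
  have eq: "(\<lambda>x. c + (\<Sum>j\<in>Basis. (m * (x \<bullet> j)) *\<^sub>R j)) = (\<lambda>x. m *\<^sub>R x + c)"
    unfolding scaleR_scaleR[symmetric] scaleR_sum_right[symmetric]
    by (auto simp add: euclidean_representation ac_simps)
  show ?thesis
    using lebesgue_affine_euclidean[of "\<lambda>_. m" c] assms by (simp add: eq)
qed

lemma aff_meas:
  fixes m :: real and c :: "'a::euclidean_space"
  assumes "m > 0"
  shows "(\<lambda>x. m *\<^sub>R x + c) \<in> lebesgue \<rightarrow>\<^sub>M lebesgue"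
proof -
  have eq: "(\<lambda>x. c + (\<Sum>j\<in>Basis. (m * (x \<bullet> j)) *\<^sub>R j)) = (\<lambda>x. m *\<^sub>R x + c)"
    unfolding scaleR_scaleR[symmetric] scaleR_sum_right[symmetric]
    by (auto simp add: euclidean_representation ac_simps)
  show ?thesis
    using lebesgue_affine_measurable[of "\<lambda>_. m" c] assms by (simp add: eq)
qed

lemma aff_integral:
  fixes f :: "'a::euclidean_space \<Rightarrow> real" and m :: real
  assumes m: "m > 0" and f: "f absolutely_integrable_on S"
  shows "(\<lambda>x. f (m *\<^sub>R x + c)) absolutely_integrable_on ((\<lambda>x. m *\<^sub>R x + c) -` S)
    \<and> integral ((\<lambda>x. m *\<^sub>R x + c) -` S) (\<lambda>x. f (m *\<^sub>R x + c)) = integral S f / m ^ DIM('a)"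
proof -
  let ?T = "\<lambda>x. m *\<^sub>R x + c"
  define g where "g = (\<lambda>x. indicator S x *\<^sub>R f x)"
  have gi: "integrable lebesgue g" using f unfolding g_def absolutely_integrable_on_def set_integrable_def by simp
  have Tm: "?T \<in> lebesgue \<rightarrow>\<^sub>M lebesgue" by (rule aff_meas[OF m])
  have gm: "g \<in> borel_measurable lebesgue" using gi by auto
  have "integrable (density (distr lebesgue lebesgue ?T) (\<lambda>_. ennreal (m ^ DIM('a)))) g"
    using gi aff_lebesgue[OF m, of c] by simp
  then have "integrable (distr lebesgue lebesgue ?T) (\<lambda>x. m ^ DIM('a) *\<^sub>R g x)"
    using m by (subst (asm) integrable_density) (auto simp: gm)
  then have "integrable (distr lebesgue lebesgue ?T) (\<lambda>x. (1 / m ^ DIM('a)) *\<^sub>R (m ^ DIM('a) *\<^sub>R g x))"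
    by (rule integrable_scaleR_right)
  then have "integrable (distr lebesgue lebesgue ?T) g"
    using m by simp
  then have i2: "integrable lebesgue (\<lambda>x. g (?T x))"
    using Tm gm by (simp add: integrable_distr_eq)
  have "integral\<^sup>L lebesgue g = integral\<^sup>L (density (distr lebesgue lebesgue ?T) (\<lambda>_. ennreal (m ^ DIM('a)))) g"
    using aff_lebesgue[OF m, of c] by simp
  also have "\<dots> = integral\<^sup>L (distr lebesgue lebesgue ?T) (\<lambda>x. m ^ DIM('a) *\<^sub>R g x)"
    using m gm by (subst integral_density) auto
  also have "\<dots> = integral\<^sup>L lebesgue (\<lambda>x. m ^ DIM('a) *\<^sub>R g (?T x))"
    using Tm gm by (subst integral_distr) auto
  also have "\<dots> = m ^ DIM('a) * integral\<^sup>L lebesgue (\<lambda>x. g (?T x))"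
    by simp
  finally have I: "integral\<^sup>L lebesgue g = m ^ DIM('a) * integral\<^sup>L lebesgue (\<lambda>x. g (?T x))" .
  have geq: "(\<lambda>x. g (?T x)) = (\<lambda>x. indicator (?T -` S) x *\<^sub>R f (?T x))"
    by (auto simp: g_def indicator_def)
  have A: "(\<lambda>x. f (?T x)) absolutely_integrable_on (?T -` S)"
    using i2 unfolding absolutely_integrable_on_def set_integrable_def geq by simp
  have "integral (?T -` S) (\<lambda>x. f (?T x)) = integral\<^sup>L lebesgue (\<lambda>x. g (?T x))"
    using set_lebesgue_integral_eq_integral(2)[OF A] unfolding geq
    by (simp add: set_lebesgue_integral_def)
  moreover have "integral S f = integral\<^sup>L lebesgue g"
    using set_lebesgue_integral_eq_integral(2)[OF f] unfolding g_def
    by (simp add: set_lebesgue_integral_def)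
  ultimately show ?thesis using A I m by (simp add: field_simps)
qed


lemma zero_lemma:
  fixes f :: "'a::euclidean_space \<Rightarrow> real"
  assumes S: "open S" and c: "continuous_on S f" and nn: "\<And>x. x \<in> S \<Longrightarrow> 0 \<le> f x"
    and i: "f integrable_on S" and z: "integral S f = 0" and x: "x \<in> S"
  shows "f x = 0"
proof -
  obtain a b where ab: "cbox a b \<subseteq> S" "x \<in> box a b"
    using open_contains_cbox[OF S x] by metis
  have cc: "continuous_on (cbox a b) f" using c ab(1) by (rule continuous_on_subset)
  have ic: "f integrable_on cbox a b" using cc by (rule integrable_continuous)
  have "integral (cbox a b) f \<le> integral S f"
    by (rule integral_subset_le[OF ab(1) ic i]) (simp add: nn)
  moreover have "0 \<le> integral (cbox a b) f"
    by (rule integral_nonneg[OF ic]) (use ab(1) nn in auto)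
  ultimately have "integral (cbox a b) f = 0" using z by simp
  then have h0: "(f has_integral 0) (cbox a b)" using integrable_integral[OF ic] by simp
  have ne: "box a b \<noteq> {}" using ab(2) by blast
  have xc: "x \<in> cbox a b" using ab(2) box_subset_cbox by blast
  show ?thesis
    by (rule has_integral_0_cbox_imp_0[OF cc _ h0 ne xc]) (meson ab(1) box_subset_cbox nn subsetD)
qed

context
  fixes P :: "'a::euclidean_space set" and \<phi> :: "'a \<Rightarrow> real" and y :: 'a
  assumes bP: "bounded P" and oP: "open P" and cP: "convex P"
    and cphi: "convex_on P \<phi>"
    and yP: "y \<in> closure P"
    and lsc: "lsc_ext P \<phi> y = -1"
begin

lemma L_mem: assumes "x \<in> P" "0 < t" "t \<le> 1" shows "(1 - t) *\<^sub>R y + t *\<^sub>R x \<in> P"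
proof -
  have "y - t *\<^sub>R (y - x) \<in> interior P"
    using mem_interior_closure_convex_shrink[OF cP _ yP, of x t] assms interior_open[OF oP] by simp
  moreover have "y - t *\<^sub>R (y - x) = (1 - t) *\<^sub>R y + t *\<^sub>R x" by (simp add: algebra_simps)
  ultimately show ?thesis using interior_open[OF oP] by simp
qed

lemma L_cont: "continuous_on P \<phi>" using convex_on_continuous[OF oP cphi] .

lemma L_D: assumes x: "x \<in> P" and t: "0 < t" "t \<le> 1"
  shows "\<phi> ((1 - t) *\<^sub>R y + t *\<^sub>R x) \<le> -(1 - t) + t * \<phi> x"
proof (cases "t = 1")
  case True then show ?thesis by simp
next
  case False
  with t have t1: "t < 1" by simp
  define z where "z = (1 - t) *\<^sub>R y + t *\<^sub>R x"
  have zP: "z \<in> P" unfolding z_def using L_mem x t by blast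
  show ?thesis unfolding z_def[symmetric]
  proof (rule field_le_epsilon)
    fix e :: real assume e: "0 < e"
    obtain d where d: "d > 0" "\<forall>w\<in>P. dist w z < d \<longrightarrow> dist (\<phi> w) (\<phi> z) < e / 2"
      using L_cont zP e unfolding continuous_on_iff by (meson half_gt_zero)
    have LL: "Liminf (at y within P) (\<lambda>x. ereal (\<phi> x)) = ereal (-1)"
      using lsc unfolding lsc_ext_def by (simp add: one_ereal_def)
    have "\<not> (ereal (-1 + e/2) \<le> Liminf (at y within P) (\<lambda>x. ereal (\<phi> x)))"
      unfolding LL using e by simp
    then obtain c where c: "c < ereal (-1 + e/2)"
      and nev: "\<not> eventually (\<lambda>x. c < ereal (\<phi> x)) (at y within P)"
      unfolding le_Liminf_iff by blast
    then have "frequently (\<lambda>x. \<not> c < ereal (\<phi> x)) (at y within P)"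
      by (simp add: not_eventually)
    then obtain v where v: "v \<in> P" "dist v y < d" "\<not> c < ereal (\<phi> v)"
      unfolding frequently_at using d(1) by blast
    have "ereal (\<phi> v) \<le> c" using v(3) by (simp add: not_less)
    then have "ereal (\<phi> v) < ereal (-1 + e/2)" using c by (rule le_less_trans)
    then have phv: "\<phi> v < -1 + e/2" by simp
    define w where "w = (1 - t) *\<^sub>R v + t *\<^sub>R x"
    have wP: "w \<in> P" unfolding w_def using convexD[OF cP v(1) x, of "1-t" t] t1 t by simp
    have "w - z = (1 - t) *\<^sub>R (v - y)" unfolding w_def z_def by (simp add: algebra_simps)
    then have "dist w z = (1 - t) * dist v y" using t1 by (simp add: dist_norm dist_commute)
    also have "\<dots> \<le> dist v y" using t t1 by (simp add: mult_left_le_one_le)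
    finally have "dist w z < d" using v(2) by simp
    then have "\<bar>\<phi> w - \<phi> z\<bar> < e/2" using d(2) wP unfolding dist_real_def by blast
    then have "\<phi> z < \<phi> w + e/2" by linarith
    moreover have "\<phi> w \<le> (1 - t) * \<phi> v + t * \<phi> x"
      unfolding w_def using convex_onD[OF cphi, of t v x] t t1 v(1) x by simp
    moreover have "(1 - t) * \<phi> v \<le> (1 - t) * (-1 + e/2)"
      using phv t1 by (simp add: mult_left_mono)
    moreover have "(1 - t) * (e/2) \<le> e/2" using t e by (simp add: mult_left_le_one_le)
    moreover have "(1 - t) * (-1 + e/2) = -(1 - t) + (1 - t) * (e/2)" by (simp add: algebra_simps)
    ultimately show "\<phi> z \<le> -(1 - t) + t * \<phi> x + e" by linarith
  qed
qed

lemma L_Pne: "P \<noteq> {}" using yP by auto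

lemma L_Vpos: "0 < measure lebesgue P"
proof -
  have Pl: "P \<in> lmeasurable" using lmeasurable_open[OF bP oP] .
  obtain x where x: "x \<in> P" using L_Pne by blast
  have ge: "0 \<le> measure lebesgue P" by (rule measure_nonneg)
  have ne: "measure lebesgue P \<noteq> 0"
  proof
    assume V0: "measure lebesgue P = 0"
    have "(\<lambda>x::'a. 1::real) x = 0"
    proof (rule zero_lemma[OF oP _ _ _ _ x])
      show "continuous_on P (\<lambda>x. 1::real)" by simp
      show "(\<lambda>x::'a. 1::real) integrable_on P" using integrable_on_const[OF Pl] .
      show "integral P (\<lambda>x::'a. 1::real) = 0" using V0 lmeasure_integral[OF Pl] by simp
    qed simp
    then show False by simp
  qed
  show ?thesis using ge ne by linarith
qed

context
  fixes t0 :: real and Q :: "'a set"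
  assumes t0_def: "t0 = real DIM('a) / (real DIM('a) + 1)"
    and Q_def: "Q = (\<lambda>x. (1 - t0) *\<^sub>R y + t0 *\<^sub>R x) ` P"
begin

lemma t0_pos: "0 < t0" and t0_lt1: "t0 < 1" and t0_compl: "1 - t0 = 1 / (real DIM('a) + 1)"
proof -
  have n: "0 < real DIM('a)" by simp
  show "0 < t0" unfolding t0_def using n by simp
  show "t0 < 1" unfolding t0_def using n by simp
  show "1 - t0 = 1 / (real DIM('a) + 1)" unfolding t0_def using n by (simp add: field_simps)
qed

lemma L_QP: "Q \<subseteq> P"
  unfolding Q_def using L_mem t0_pos t0_lt1 by auto

lemma L_Qopen: "open Q"
  unfolding Q_def by (rule open_affinity[OF oP]) (use t0_pos in simp)

lemma L_Qconvex: "convex Q"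
  unfolding Q_def by (rule convex_affinity[OF cP])

lemma L_preimage: "(\<lambda>x. t0 *\<^sub>R x + (1 - t0) *\<^sub>R y) -` Q = P"
proof
  show "(\<lambda>x. t0 *\<^sub>R x + (1 - t0) *\<^sub>R y) -` Q \<subseteq> P"
  proof
    fix x assume "x \<in> (\<lambda>x. t0 *\<^sub>R x + (1 - t0) *\<^sub>R y) -` Q"
    then obtain p where p: "p \<in> P" "t0 *\<^sub>R x + (1 - t0) *\<^sub>R y = (1 - t0) *\<^sub>R y + t0 *\<^sub>R p"
      unfolding Q_def by auto
    then have "t0 *\<^sub>R x = t0 *\<^sub>R p" by (simp add: algebra_simps)
    then have "x = p" using t0_pos by simp
    then show "x \<in> P" using p by simp
  qed
  show "P \<subseteq> (\<lambda>x. t0 *\<^sub>R x + (1 - t0) *\<^sub>R y) -` Q"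
    unfolding Q_def by (auto simp: algebra_simps)
qed

context
  assumes ai: "\<phi> absolutely_integrable_on P" and i0: "integral P \<phi> = 0"
    and W: "integral P (\<lambda>x. \<bar>\<phi> x\<bar>) = 2 / (real DIM('a) + 1) * t0 ^ DIM('a) * measure lebesgue P"
begin

lemma L_pw:
  shows "\<forall>x\<in>P. \<phi> ((1 - t0) *\<^sub>R y + t0 *\<^sub>R x) = -(1 - t0) + t0 * \<phi> x"
    and "\<forall>x\<in>Q. \<phi> x \<le> 0"
    and "\<forall>x\<in>P - closure Q. 0 \<le> \<phi> x"
proof -
  define V where "V = measure lebesgue P"
  define U where "U = P - closure Q"
  define F where "F = (\<lambda>x. \<phi> ((1 - t0) *\<^sub>R y + t0 *\<^sub>R x))"
  define h where "h = (\<lambda>x. -(1 - t0) + t0 * \<phi> x - F x)"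
  define pos where "pos = (\<lambda>x. (\<bar>\<phi> x\<bar> + \<phi> x) / 2)"
  define neg where "neg = (\<lambda>x. (\<bar>\<phi> x\<bar> - \<phi> x) / 2)"
  have Pl: "P \<in> lmeasurable" using lmeasurable_open[OF bP oP] .
  have Ql: "Q \<in> lmeasurable" using lmeasurable_open[OF bounded_subset[OF bP L_QP] L_Qopen] .
  have Uopen: "open U" unfolding U_def using oP by (rule open_Diff) simp
  have Ul: "U \<in> lmeasurable" using lmeasurable_open[OF bounded_subset[OF bP] Uopen] U_def by blast
  have sub_int: "\<phi> integrable_on A \<and> (\<lambda>x. \<bar>\<phi> x\<bar>) integrable_on A" if "A \<in> lmeasurable" "A \<subseteq> P" for A
  proof -
    have "\<phi> absolutely_integrable_on A"
      by (rule set_integrable_subset[OF ai]) (use that in auto)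
    then show ?thesis unfolding absolutely_integrable_on_def by simp
  qed
  have pos_int: "pos integrable_on A" and neg_int: "neg integrable_on A"
    if "A \<in> lmeasurable" "A \<subseteq> P" for A
    using sub_int[OF that] unfolding pos_def neg_def
    by (auto intro!: integrable_on_divide integrable_add integrable_diff)
  have aQ: "\<phi> absolutely_integrable_on Q"
    by (rule set_integrable_subset[OF ai]) (use Ql L_QP in auto)
  have aff: "(\<lambda>x. \<phi> (t0 *\<^sub>R x + (1 - t0) *\<^sub>R y)) absolutely_integrable_on P
      \<and> integral P (\<lambda>x. \<phi> (t0 *\<^sub>R x + (1 - t0) *\<^sub>R y)) = integral Q \<phi> / t0 ^ DIM('a)"
    using aff_integral[OF t0_pos aQ, of "(1 - t0) *\<^sub>R y"] unfolding L_preimage .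
  have Feq: "(\<lambda>x. \<phi> (t0 *\<^sub>R x + (1 - t0) *\<^sub>R y)) = F" unfolding F_def by (simp add: add.commute)
  have Fint: "F integrable_on P" and FI: "integral P F = integral Q \<phi> / t0 ^ DIM('a)"
    using aff unfolding Feq absolutely_integrable_on_def by auto
  have phint: "\<phi> integrable_on P" using sub_int[OF Pl] by simp
  have c_int: "(\<lambda>x. -(1 - t0)) integrable_on P" using integrable_on_const[OF Pl] .
  have tphi_int: "(\<lambda>x. t0 * \<phi> x) integrable_on P" using phint by (rule integrable_on_mult_right)
  have hint: "h integrable_on P" unfolding h_def
    by (intro integrable_diff integrable_add c_int tphi_int Fint)
  have cI: "integral P (\<lambda>x. -(1 - t0)) = -(1 - t0) * V"
  proof -
    have "integral P (\<lambda>x. -(1 - t0) * 1) = -(1 - t0) * integral P (\<lambda>x. 1)"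
      by (rule integral_mult_right)
    then show ?thesis using lmeasure_integral[OF Pl] unfolding V_def by simp
  qed
  have hI: "integral P h = -(1 - t0) * V - integral Q \<phi> / t0 ^ DIM('a)"
  proof -
    have "integral P h = integral P (\<lambda>x. -(1 - t0) + t0 * \<phi> x) - integral P F"
      unfolding h_def by (rule Henstock_Kurzweil_Integration.integral_diff) (intro integrable_add c_int tphi_int, rule Fint)
    also have "integral P (\<lambda>x. -(1 - t0) + t0 * \<phi> x) = integral P (\<lambda>x. -(1 - t0)) + integral P (\<lambda>x. t0 * \<phi> x)"
      by (rule Henstock_Kurzweil_Integration.integral_add[OF c_int tphi_int])
    finally show ?thesis using cI FI i0 by simp
  qed
  have hnn: "0 \<le> h x" if "x \<in> P" for x
    using L_D[OF that t0_pos less_imp_le[OF t0_lt1]] unfolding h_def F_def by simp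
  have hcont: "continuous_on P h"
  proof -
    have "continuous_on P F" unfolding F_def
    proof (rule continuous_on_compose2[OF L_cont])
      show "continuous_on P (\<lambda>x. (1 - t0) *\<^sub>R y + t0 *\<^sub>R x)" by (intro continuous_intros)
      show "(\<lambda>x. (1 - t0) *\<^sub>R y + t0 *\<^sub>R x) ` P \<subseteq> P" using L_QP unfolding Q_def .
    qed
    then show ?thesis unfolding h_def using L_cont by (intro continuous_intros)
  qed
  have Qeq: "integral Q \<phi> = integral Q pos - integral Q neg"
  proof -
    have "integral Q pos - integral Q neg = integral Q (\<lambda>x. pos x - neg x)"
      by (rule Henstock_Kurzweil_Integration.integral_diff[symmetric]) (use pos_int neg_int Ql L_QP in auto)
    also have "(\<lambda>x. pos x - neg x) = \<phi>" unfolding pos_def neg_def by (auto simp: field_simps)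
    finally show ?thesis by simp
  qed
  have negP: "integral P neg = t0 ^ DIM('a) * (1 - t0) * V"
  proof -
    have "integral P neg = integral P (\<lambda>x. (\<bar>\<phi> x\<bar> - \<phi> x)) / 2"
      unfolding neg_def by (rule integral_divide)
    also have "integral P (\<lambda>x. (\<bar>\<phi> x\<bar> - \<phi> x)) = integral P (\<lambda>x. \<bar>\<phi> x\<bar>) - integral P \<phi>"
      by (rule Henstock_Kurzweil_Integration.integral_diff) (use sub_int[OF Pl] in auto)
    finally have "integral P neg = (2 / (real DIM('a) + 1) * t0 ^ DIM('a) * V - 0) / 2"
      using W i0 unfolding V_def by simp
    then show ?thesis unfolding t0_compl by (simp add: field_simps)
  qed
  have QU: "integral Q neg + integral U neg \<le> integral P neg"
  proof -
    have iQ: "neg integrable_on Q" using neg_int Ql L_QP by blast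
    have iU: "neg integrable_on U" using neg_int Ul unfolding U_def by blast
    have dj: "Q \<inter> U = {}" unfolding U_def using closure_subset by blast
    have "integral (Q \<union> U) neg = integral Q neg + integral U neg"
      by (rule integral_Un[OF iQ iU]) (simp add: dj)
    moreover have "integral (Q \<union> U) neg \<le> integral P neg"
    proof (rule integral_subset_le)
      show "Q \<union> U \<subseteq> P" using L_QP unfolding U_def by blast
      show "neg integrable_on Q \<union> U" by (rule integrable_Un) (simp_all add: dj iQ iU)
      show "neg integrable_on P" using neg_int Pl by blast
      show "\<forall>x\<in>P. 0 \<le> neg x" unfolding neg_def by (simp add: abs_ge_self)
    qed
    ultimately show ?thesis by simp
  qed
  have A0: "0 \<le> integral Q pos"
    by (rule integral_nonneg) (use pos_int Ql L_QP in auto, simp add: pos_def)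
  have B0: "0 \<le> integral U neg"
    by (rule integral_nonneg) (use neg_int Ul U_def in auto, simp add: neg_def)
  have H0: "0 \<le> integral P h" by (rule integral_nonneg[OF hint hnn])
  have tn: "0 < t0 ^ DIM('a)" using t0_pos by simp
  have key: "t0 ^ DIM('a) * integral P h = -(t0 ^ DIM('a) * (1 - t0) * V) - integral Q \<phi>"
  proof -
    have "t0 ^ DIM('a) * integral P h = t0 ^ DIM('a) * (-(1 - t0) * V) - t0 ^ DIM('a) * (integral Q \<phi> / t0 ^ DIM('a))"
      unfolding hI by (rule right_diff_distrib)
    also have "t0 ^ DIM('a) * (integral Q \<phi> / t0 ^ DIM('a)) = integral Q \<phi>" using t0_pos by simp
    finally show ?thesis by (simp add: algebra_simps)
  qed
  have tH: "0 \<le> t0 ^ DIM('a) * integral P h" using tn H0 by simp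
  have "t0 ^ DIM('a) * integral P h + integral Q pos + integral U neg \<le> 0"
    using key Qeq negP QU by linarith
  then have z1: "t0 ^ DIM('a) * integral P h = 0" and z2: "integral Q pos = 0" and z3: "integral U neg = 0"
    using tH A0 B0 by linarith+
  have z1': "integral P h = 0" using z1 t0_pos by simp
  show "\<forall>x\<in>P. \<phi> ((1 - t0) *\<^sub>R y + t0 *\<^sub>R x) = -(1 - t0) + t0 * \<phi> x"
  proof
    fix x assume x: "x \<in> P"
    have "h x = 0" by (rule zero_lemma[OF oP hcont hnn hint z1' x])
    then show "\<phi> ((1 - t0) *\<^sub>R y + t0 *\<^sub>R x) = -(1 - t0) + t0 * \<phi> x" unfolding h_def F_def by simp
  qed
  show "\<forall>x\<in>Q. \<phi> x \<le> 0"
  proof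
    fix x assume x: "x \<in> Q"
    have "pos x = 0"
    proof (rule zero_lemma[OF L_Qopen _ _ _ z2 x])
      show "continuous_on Q pos" unfolding pos_def
        using continuous_on_subset[OF L_cont L_QP] by (intro continuous_intros) auto
      show "\<And>x. x \<in> Q \<Longrightarrow> 0 \<le> pos x" unfolding pos_def by simp
      show "pos integrable_on Q" using pos_int Ql L_QP by blast
    qed
    then show "\<phi> x \<le> 0" unfolding pos_def by simp
  qed
  show "\<forall>x\<in>P - closure Q. 0 \<le> \<phi> x"
  proof
    fix x assume x: "x \<in> P - closure Q"
    have "neg x = 0"
    proof (rule zero_lemma[OF Uopen _ _ _ z3])
      show "continuous_on U neg" unfolding neg_def
        using continuous_on_subset[OF L_cont, of U] U_def by (intro continuous_intros) auto
      show "\<And>x. x \<in> U \<Longrightarrow> 0 \<le> neg x" unfolding neg_def by simp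
      show "neg integrable_on U" using neg_int Ul U_def by blast
      show "x \<in> U" using x U_def by simp
    qed
    then show "0 \<le> \<phi> x" unfolding neg_def by simp
  qed
qed


lemma L_comp: "(1 - s) *\<^sub>R y + s *\<^sub>R ((1 - t) *\<^sub>R y + t *\<^sub>R x) = (1 - s * t) *\<^sub>R y + (s * t) *\<^sub>R x"
  by (simp add: algebra_simps)

lemma L_hom1: assumes x: "x \<in> P" and t: "0 < t" "t \<le> 1"
  shows "\<phi> ((1 - t) *\<^sub>R y + t *\<^sub>R x) + 1 = t * (\<phi> x + 1)"
proof -
  define k where "k = (\<lambda>s. \<phi> ((1 - s) *\<^sub>R y + s *\<^sub>R x) + 1)"
  have k1: "k 1 = \<phi> x + 1" unfolding k_def by simp
  have kD: "k (r * s) \<le> r * k s" if s: "0 < s" "s \<le> 1" and r: "0 < r" "r \<le> 1" for r s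
  proof -
    have xs: "(1 - s) *\<^sub>R y + s *\<^sub>R x \<in> P" using L_mem[OF x s] .
    have "\<phi> ((1 - r) *\<^sub>R y + r *\<^sub>R ((1 - s) *\<^sub>R y + s *\<^sub>R x)) \<le> -(1 - r) + r * \<phi> ((1 - s) *\<^sub>R y + s *\<^sub>R x)"
      using L_D[OF xs r] .
    then show ?thesis unfolding k_def L_comp by (simp add: algebra_simps)
  qed
  have kA: "k (t0 * s) = t0 * k s" if s: "0 < s" "s \<le> 1" for s
  proof -
    have xs: "(1 - s) *\<^sub>R y + s *\<^sub>R x \<in> P" using L_mem[OF x s] .
    have "\<phi> ((1 - t0) *\<^sub>R y + t0 *\<^sub>R ((1 - s) *\<^sub>R y + s *\<^sub>R x)) = -(1 - t0) + t0 * \<phi> ((1 - s) *\<^sub>R y + s *\<^sub>R x)"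
      using L_pw(1) xs by blast
    then show ?thesis unfolding k_def L_comp by (simp add: algebra_simps)
  qed
  have tp: "0 < t0 ^ m \<and> t0 ^ m \<le> 1" for m using t0_pos t0_lt1 by (simp add: power_le_one)
  have kpow: "k (t0 ^ m) = t0 ^ m * k 1" for m
  proof (induction m)
    case 0 then show ?case by simp
  next
    case (Suc m)
    have "k (t0 ^ Suc m) = k (t0 * t0 ^ m)" by simp
    also have "\<dots> = t0 * k (t0 ^ m)" using kA tp by blast
    finally show ?case using Suc by simp
  qed
  obtain m where m: "t0 ^ m < t" using real_arch_pow_inv[OF t(1) t0_lt1] by blast
  have tm: "0 < t0 ^ m" using tp by blast
  have "k ((t0 ^ m / t) * t) \<le> (t0 ^ m / t) * k t"
    by (rule kD[OF t]) (use tm t m in auto)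
  moreover have "(t0 ^ m / t) * t = t0 ^ m" using t by simp
  ultimately have "t0 ^ m * k 1 \<le> t0 ^ m * (k t / t)" using kpow by simp
  then have "k 1 \<le> k t / t" using tm by (metis mult_le_cancel_left_pos times_divide_eq_right)
  then have lo: "t * k 1 \<le> k t" using t by (simp add: field_simps)
  have hi: "k t \<le> t * k 1" using kD[of 1 t] t by simp
  show ?thesis using lo hi k1 unfolding k_def by simp
qed

lemma L_hom: assumes z: "z \<in> P" and s: "0 < s" and x: "x = (1 - s) *\<^sub>R y + s *\<^sub>R z" and xP: "x \<in> P"
  shows "\<phi> x + 1 = s * (\<phi> z + 1)"
proof (cases "s \<le> 1")
  case True then show ?thesis using L_hom1[OF z s] x by simp
next
  case False
  have zx: "z = (1 - 1 / s) *\<^sub>R y + (1 / s) *\<^sub>R x" unfolding x L_comp using s by simp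
  have "\<phi> z + 1 = (1 / s) * (\<phi> x + 1)" unfolding zx by (rule L_hom1[OF xP]) (use False in auto)
  then show ?thesis using s by (simp add: field_simps)
qed

lemma L_push: assumes "open S" "x \<in> S" shows "\<exists>e>0. x + e *\<^sub>R (x - y) \<in> S"
proof -
  obtain r where r: "r > 0" "ball x r \<subseteq> S" using assms open_contains_ball by blast
  define e where "e = r / (2 * (norm (x - y) + 1))"
  have npos: "0 < norm (x - y) + 1" by (simp add: add_nonneg_pos)
  have "0 < 2 * (norm (x - y) + 1)" by (simp add: add_nonneg_pos)
  then have e: "e > 0" unfolding e_def using r(1) by simp
  have "norm (e *\<^sub>R (x - y)) = e * norm (x - y)" using e by simp
  also have "\<dots> < r"
  proof -
    have "e * norm (x - y) \<le> e * (norm (x - y) + 1)" using e by simp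
    also have "\<dots> = r / 2" unfolding e_def using npos by (simp add: field_simps)
    finally show ?thesis using r by simp
  qed
  finally have "x + e *\<^sub>R (x - y) \<in> ball x r" by (simp add: dist_norm)
  then show ?thesis using r e by blast
qed

lemma L_neg: assumes x: "x \<in> P" shows "\<phi> x < 0 \<longleftrightarrow> x \<in> Q"
proof
  assume "x \<in> Q"
  then obtain e where e: "e > 0" "x + e *\<^sub>R (x - y) \<in> Q" using L_push[OF L_Qopen] by blast
  define x' where "x' = x + e *\<^sub>R (x - y)"
  have x'P: "x' \<in> P" using e L_QP unfolding x'_def by blast
  have ph': "\<phi> x' \<le> 0" using L_pw(2) e unfolding x'_def by blast
  define s where "s = 1 / (1 + e)"
  have s: "0 < s" "s < 1" unfolding s_def using e by auto
  have xx: "x = (1 - s) *\<^sub>R y + s *\<^sub>R x'"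
  proof -
    have "(1 - s) *\<^sub>R y + s *\<^sub>R x' = (1 - s) *\<^sub>R y + (s * (1 + e)) *\<^sub>R x - (s * e) *\<^sub>R y"
      unfolding x'_def by (simp add: algebra_simps)
    also have "s * (1 + e) = 1" unfolding s_def using e by simp
    also have "(1 - s) *\<^sub>R y + 1 *\<^sub>R x - (s * e) *\<^sub>R y = x + (1 - s * (1 + e)) *\<^sub>R y"
      by (simp add: algebra_simps)
    also have "s * (1 + e) = 1" unfolding s_def using e by simp
    finally show ?thesis by simp
  qed
  have "\<phi> x + 1 = s * (\<phi> x' + 1)" by (rule L_hom[OF x'P s(1) xx x])
  also have "\<dots> \<le> s * 1" using ph' s by (intro mult_left_mono) auto
  finally show "\<phi> x < 0" using s by simp
next
  assume ph: "\<phi> x < 0"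
  define Ws where "Ws = P \<inter> \<phi> -` {..<0}"
  have oW: "open Ws" unfolding Ws_def by (rule continuous_open_preimage[OF L_cont oP]) simp
  have "Ws \<subseteq> closure Q"
  proof
    fix w assume w: "w \<in> Ws"
    show "w \<in> closure Q"
    proof (rule ccontr)
      assume "w \<notin> closure Q"
      then have "0 \<le> \<phi> w" using L_pw(3) w unfolding Ws_def by blast
      then show False using w unfolding Ws_def by simp
    qed
  qed
  then have "Ws \<subseteq> interior (closure Q)" using oW by (rule interior_maximal)
  also have "\<dots> = Q" using convex_interior_closure[OF L_Qconvex] interior_open[OF L_Qopen] by simp
  finally show "x \<in> Q" using x ph unfolding Ws_def by blast
qed

lemma L_sub_geq1: assumes x: "x \<in> P" and s: "1 \<le> s" and ph: "\<phi> x + 1 < s"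
  shows "(1 - 1 / s) *\<^sub>R y + (1 / s) *\<^sub>R x \<in> Q"
proof -
  have s0: "0 < 1 / s" "1 / s \<le> 1" using s by auto
  have uP: "(1 - 1 / s) *\<^sub>R y + (1 / s) *\<^sub>R x \<in> P" using L_mem[OF x s0] .
  have "\<phi> ((1 - 1 / s) *\<^sub>R y + (1 / s) *\<^sub>R x) + 1 = (1 / s) * (\<phi> x + 1)" using L_hom1[OF x s0] .
  also have "\<dots> < 1" using ph s by (simp add: field_simps)
  finally show ?thesis using L_neg[OF uP] by simp
qed

lemma L_sub_ind: "\<forall>x\<in>P. \<forall>s. t0 ^ k \<le> s \<and> \<phi> x + 1 < s \<longrightarrow> (1 - 1 / s) *\<^sub>R y + (1 / s) *\<^sub>R x \<in> Q"
proof (induction k)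
  case 0 then show ?case using L_sub_geq1 by simp
next
  case (Suc k)
  show ?case
  proof (intro ballI allI impI)
    fix x s assume x: "x \<in> P" and hs: "t0 ^ Suc k \<le> s \<and> \<phi> x + 1 < s"
    show "(1 - 1 / s) *\<^sub>R y + (1 / s) *\<^sub>R x \<in> Q"
    proof (cases "1 \<le> s")
      case True then show ?thesis using L_sub_geq1 x hs by blast
    next
      case False
      have s0: "0 < s" using hs zero_less_power[OF t0_pos, of "Suc k"] by linarith
      have "\<phi> x < 0" using hs False by simp
      then have "x \<in> Q" using L_neg x by blast
      then obtain p where p: "p \<in> P" "x = (1 - t0) *\<^sub>R y + t0 *\<^sub>R p" unfolding Q_def by blast
      have "\<phi> x + 1 = t0 * (\<phi> p + 1)" by (rule L_hom[OF p(1) t0_pos p(2) x])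
      then have pp: "\<phi> p + 1 < s / t0" using hs t0_pos by (simp add: field_simps)
      have "t0 * t0 ^ k \<le> s" using hs by simp
      then have "t0 ^ k \<le> s / t0" using t0_pos by (simp add: field_simps)
      then have "(1 - 1 / (s / t0)) *\<^sub>R y + (1 / (s / t0)) *\<^sub>R p \<in> Q" using Suc.IH p(1) pp by blast
      moreover have "(1 - 1 / s) *\<^sub>R y + (1 / s) *\<^sub>R x = (1 - 1 / (s / t0)) *\<^sub>R y + (1 / (s / t0)) *\<^sub>R p"
        unfolding p(2) L_comp by simp
      ultimately show ?thesis by simp
    qed
  qed
qed

lemma L_sublevel: assumes l: "0 < l" "l < 1"
  shows "{x\<in>P. \<phi> x < l / t0 - 1} = (\<lambda>z. (1 - l) *\<^sub>R y + l *\<^sub>R z) ` P"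
proof
  define s where "s = l / t0"
  have s0: "0 < s" unfolding s_def using l t0_pos by simp
  have st: "s * t0 = l" unfolding s_def using t0_pos by simp
  show "(\<lambda>z. (1 - l) *\<^sub>R y + l *\<^sub>R z) ` P \<subseteq> {x\<in>P. \<phi> x < l / t0 - 1}"
  proof
    fix x assume "x \<in> (\<lambda>z. (1 - l) *\<^sub>R y + l *\<^sub>R z) ` P"
    then obtain z where z: "z \<in> P" "x = (1 - l) *\<^sub>R y + l *\<^sub>R z" by blast
    have xP: "x \<in> P" using L_mem[OF z(1) l(1) less_imp_le[OF l(2)]] z(2) by simp
    define q where "q = (1 - t0) *\<^sub>R y + t0 *\<^sub>R z"
    have qQ: "q \<in> Q" unfolding q_def Q_def using z(1) by blast
    have qP: "q \<in> P" using qQ L_QP by blast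
    have xq: "x = (1 - s) *\<^sub>R y + s *\<^sub>R q" unfolding q_def L_comp st z(2) ..
    have "\<phi> x + 1 = s * (\<phi> q + 1)" by (rule L_hom[OF qP s0 xq xP])
    moreover have "\<phi> q < 0" using L_neg[OF qP] qQ by simp
    ultimately have "\<phi> x + 1 < s" using s0 by (simp add: mult_less_cancel_left_pos)
    then show "x \<in> {x\<in>P. \<phi> x < l / t0 - 1}" using xP unfolding s_def by simp
  qed
  show "{x\<in>P. \<phi> x < l / t0 - 1} \<subseteq> (\<lambda>z. (1 - l) *\<^sub>R y + l *\<^sub>R z) ` P"
  proof
    fix x assume "x \<in> {x\<in>P. \<phi> x < l / t0 - 1}"
    then have x: "x \<in> P" and ph: "\<phi> x + 1 < s" unfolding s_def by auto
    obtain k where k: "t0 ^ k < s" using real_arch_pow_inv[OF s0 t0_lt1] by blast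
    have "(1 - 1 / s) *\<^sub>R y + (1 / s) *\<^sub>R x \<in> Q" using L_sub_ind[of k] x k ph by simp
    then obtain p where p: "p \<in> P" "(1 - 1 / s) *\<^sub>R y + (1 / s) *\<^sub>R x = (1 - t0) *\<^sub>R y + t0 *\<^sub>R p"
      unfolding Q_def by blast
    have "x = (1 - s) *\<^sub>R y + s *\<^sub>R ((1 - 1 / s) *\<^sub>R y + (1 / s) *\<^sub>R x)"
      unfolding L_comp using s0 by simp
    also have "\<dots> = (1 - l) *\<^sub>R y + l *\<^sub>R p" unfolding p(2) L_comp st ..
    finally show "x \<in> (\<lambda>z. (1 - l) *\<^sub>R y + l *\<^sub>R z) ` P" using p(1) by blast
  qed
qed

lemma L_sup_upper: assumes x: "x \<in> P" shows "\<phi> x < 1 / t0 - 1"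
proof -
  obtain e where e: "e > 0" "x + e *\<^sub>R (x - y) \<in> P" using L_push[OF oP x] by blast
  define l where "l = 1 / (1 + e)"
  have l: "0 < l" "l < 1" unfolding l_def using e by auto
  have "x = (1 - l) *\<^sub>R y + l *\<^sub>R (x + e *\<^sub>R (x - y))"
  proof -
    have "(1 - l) *\<^sub>R y + l *\<^sub>R (x + e *\<^sub>R (x - y)) = (l * (1 + e)) *\<^sub>R x + (1 - l * (1 + e)) *\<^sub>R y"
      by (simp add: algebra_simps)
    also have "l * (1 + e) = 1" unfolding l_def using e by simp
    finally show ?thesis by simp
  qed
  then have "x \<in> (\<lambda>z. (1 - l) *\<^sub>R y + l *\<^sub>R z) ` P" using e(2) by blast
  then have "\<phi> x < l / t0 - 1" using L_sublevel[OF l] by blast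
  also have "\<dots> < 1 / t0 - 1" using l t0_pos by (simp add: divide_strict_right_mono)
  finally show ?thesis .
qed

lemma L_sup_lower: assumes l: "0 < l" "l < 1" shows "\<exists>x\<in>P. l / t0 - 1 \<le> \<phi> x"
proof -
  obtain B where B: "\<forall>x\<in>P. norm x \<le> B" using bP bounded_iff by blast
  have bdd: "bdd_above ((\<lambda>x. norm (x - y)) ` P)"
  proof (rule bdd_aboveI2)
    fix x assume "x \<in> P"
    then have "norm x \<le> B" using B by blast
    then show "norm (x - y) \<le> B + norm y" using norm_triangle_ineq4[of x y] by linarith
  qed
  obtain x0 where x0: "x0 \<in> P" "x0 \<noteq> y"
  proof (rule ccontr)
    assume "\<not> thesis"
    then have "\<forall>x\<in>P. x = y" using that by blast
    then have "P = {y}" using L_Pne by auto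
    then show False using oP not_open_singleton by metis
  qed
  define R where "R = (SUP x\<in>P. norm (x - y))"
  have "norm (x0 - y) \<le> R" unfolding R_def using cSUP_upper[OF x0(1) bdd] .
  moreover have "0 < norm (x0 - y)" using x0 by simp
  ultimately have R0: "0 < R" by linarith
  have "l * R < R" using l R0 by simp
  then obtain x where x: "x \<in> P" "l * R < norm (x - y)"
    unfolding R_def using less_cSUP_iff[OF L_Pne bdd] by blast
  show ?thesis
  proof (rule bexI[OF _ x(1)], rule ccontr)
    assume "\<not> l / t0 - 1 \<le> \<phi> x"
    then have "x \<in> {x\<in>P. \<phi> x < l / t0 - 1}" using x by simp
    then obtain p where p: "p \<in> P" "x = (1 - l) *\<^sub>R y + l *\<^sub>R p" unfolding L_sublevel[OF l] by blast
    have "x - y = l *\<^sub>R (p - y)" unfolding p(2) by (simp add: algebra_simps)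
    then have "norm (x - y) = l * norm (p - y)" using l by simp
    also have "\<dots> \<le> l * R" using cSUP_upper[OF p(1) bdd] l unfolding R_def by (simp add: mult_left_mono)
    finally show False using x(2) by simp
  qed
qed

end
end
end

theorem proposition3p2:
  fixes P :: "'a::euclidean_space set" and \<phi> :: "'a \<Rightarrow> real" and y :: 'a
  assumes "bounded P" and "open P" and "convex P"
    and "\<phi> \<in> extremizers P"
    and "y \<in> closure P"
    and "(INF x\<in>P. \<phi> x) = -1" and "lsc_ext P \<phi> y = -1"
  shows "(SUP x\<in>P. ereal (\<phi> x)) = ereal (1 / real DIM('a))
    \<and> (\<forall>a::real. -1 < a \<and> a < 1 / real DIM('a) \<longrightarrow>
         {x\<in>P. \<phi> x < a} =
           (\<lambda>z. ((1 - a * real DIM('a)) / (1 + real DIM('a))) *\<^sub>R y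
                 + ((real DIM('a) * a + real DIM('a)) / (1 + real DIM('a))) *\<^sub>R z) ` P)"
proof -
  note bP = assms(1) and oP = assms(2) and cP = assms(3) and yP = assms(5) and lsc = assms(7)
  define n where "n = real DIM('a)"
  have n0: "0 < n" unfolding n_def by simp
  have d0: "0 < real DIM('a)" by simp
  have d1: "real DIM('a) + 1 \<noteq> 0" using d0 by linarith
  have d2: "real DIM('a) + real DIM('a) * real DIM('a) \<noteq> 0" 
  proof -
    have "0 < real DIM('a) * real DIM('a)" using d0 by simp
    then show ?thesis using d0 by linarith
  qed
  define t0 where "t0 = real DIM('a) / (real DIM('a) + 1)"
  define Q where "Q = (\<lambda>x. (1 - t0) *\<^sub>R y + t0 *\<^sub>R x) ` P"
  have cphi: "convex_on P \<phi>" and ai: "\<phi> absolutely_integrable_on P" and i0: "integral P \<phi> = 0"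
    and Weq: "- (2 / (real DIM('a) + 1)) * (real DIM('a) / (real DIM('a) + 1)) ^ DIM('a) * (INF x\<in>P. \<phi> x)
        = integral P (\<lambda>x. \<bar>\<phi> x\<bar>) / measure lebesgue P"
    using assms(4) unfolding extremizers_def by auto
  have Vpos: "0 < measure lebesgue P" by (rule L_Vpos[OF bP oP cP cphi yP lsc])
  have W': "integral P (\<lambda>x. \<bar>\<phi> x\<bar>) = 2 / (real DIM('a) + 1) * t0 ^ DIM('a) * measure lebesgue P"
  proof -
    have "2 / (real DIM('a) + 1) * t0 ^ DIM('a) = integral P (\<lambda>x. \<bar>\<phi> x\<bar>) / measure lebesgue P"
      using Weq assms(6) unfolding t0_def by simp
    then show ?thesis using Vpos by (simp add: field_simps)
  qed
  note ctx = bP oP cP cphi yP lsc t0_def Q_def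
  note ctxW = ctx ai i0 W'
  have t0p: "0 < t0" by (rule t0_pos[OF ctx])
  have inv: "1 / t0 - 1 = 1 / real DIM('a)" unfolding t0_def using d0 d1 d2 by (simp add: field_simps)
  have sup: "(SUP x\<in>P. ereal (\<phi> x)) = ereal (1 / real DIM('a))"
  proof (rule antisym)
    show "(SUP x\<in>P. ereal (\<phi> x)) \<le> ereal (1 / real DIM('a))"
    proof (rule SUP_least)
      fix x assume "x \<in> P"
      then have "\<phi> x < 1 / t0 - 1" by (rule L_sup_upper[OF ctxW])
      then show "ereal (\<phi> x) \<le> ereal (1 / real DIM('a))" using inv by simp
    qed
    show "ereal (1 / real DIM('a)) \<le> (SUP x\<in>P. ereal (\<phi> x))"
    proof (rule dense_le)
      fix w assume w: "w < ereal (1 / real DIM('a))"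
      show "w \<le> (SUP x\<in>P. ereal (\<phi> x))"
      proof (cases w)
        case (real r)
        define l where "l = max (t0 * (r + 1)) (t0 / 2)"
        have r1: "r < 1 / real DIM('a)" using w real by simp
        have "t0 * (r + 1) < t0 * (1 / real DIM('a) + 1)" using r1 t0p by simp
        also have "t0 * (1 / real DIM('a) + 1) = 1" unfolding t0_def using d0 d1 d2 by (simp add: field_simps)
        finally have l1: "l < 1" unfolding l_def using t0_lt1[OF ctx] by simp
        have l0: "0 < l" unfolding l_def using t0p by simp
        obtain x where x: "x \<in> P" "l / t0 - 1 \<le> \<phi> x" using L_sup_lower[OF ctxW l0 l1] by blast
        have "r \<le> l / t0 - 1"
        proof -
          have "t0 * (r + 1) \<le> l" unfolding l_def by simp
          then have "r + 1 \<le> l / t0" using t0p by (simp add: field_simps)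
          then show ?thesis by simp
        qed
        then have "w \<le> ereal (\<phi> x)" using x real by simp
        also have "\<dots> \<le> (SUP x\<in>P. ereal (\<phi> x))" using x(1) by (rule SUP_upper)
        finally show ?thesis .
      next
        case PInf then show ?thesis using w by simp
      next
        case MInf then show ?thesis by simp
      qed
    qed
  qed
  have lev: "\<forall>a::real. -1 < a \<and> a < 1 / real DIM('a) \<longrightarrow>
         {x\<in>P. \<phi> x < a} =
           (\<lambda>z. ((1 - a * real DIM('a)) / (1 + real DIM('a))) *\<^sub>R y
                 + ((real DIM('a) * a + real DIM('a)) / (1 + real DIM('a))) *\<^sub>R z) ` P"
  proof (intro allI impI)
    fix a :: real assume a: "-1 < a \<and> a < 1 / real DIM('a)"
    define l where "l = t0 * (a + 1)"
    have l0: "0 < l" unfolding l_def using a t0p by simp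
    have "t0 * (a + 1) < t0 * (1 / real DIM('a) + 1)" using a t0p by simp
    also have "t0 * (1 / real DIM('a) + 1) = 1" unfolding t0_def using d0 d1 d2 by (simp add: field_simps)
    finally have l1: "l < 1" unfolding l_def .
    have la: "l / t0 - 1 = a" unfolding l_def using t0p by simp
    have c1: "(1 - a * real DIM('a)) / (1 + real DIM('a)) = 1 - l"
      unfolding l_def t0_def using d0 d1 d2 by (simp add: field_simps)
    have c2: "(real DIM('a) * a + real DIM('a)) / (1 + real DIM('a)) = l"
      unfolding l_def t0_def using d0 d1 d2 by (simp add: field_simps)
    show "{x\<in>P. \<phi> x < a} =
           (\<lambda>z. ((1 - a * real DIM('a)) / (1 + real DIM('a))) *\<^sub>R y
                 + ((real DIM('a) * a + real DIM('a)) / (1 + real DIM('a))) *\<^sub>R z) ` P"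
      unfolding c1 c2 using L_sublevel[OF ctxW l0 l1] la by simp
  qed
  show ?thesis using sup lev by blast
qed

end
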